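(* Let $K\subset\mathbb{C}$ be a finite Galois extension of $\mathbb{Q}$ of degree $n$, with Galois group $G=\{\sigma_1,\dots,\sigma_n\}$, ring of integers $O_K$ and discriminant $D_K$. Let $\beta\in O_K$ be such that $(\sigma_1(\beta),\dots,\sigma_n(\beta))$ is a $\mathbb{Q}$-basis of $K$. Then $|\sigma_1(\beta)|^2+\cdots+|\sigma_n(\beta)|^2\geqslant|D_K|^{1/n}$. *)

theory Defs
  imports Complex_Main "HOL-Computational_Algebra.Polynomial" "Jordan_Normal_Form.Determinant"
begin

definition subfield_C :: "complex set \<Rightarrow> bool" where
  "subfield_C K \<longleftrightarrow> 0 \<in> K \<and> 1 \<in> K \<and>
     (\<forall>x\<in>K. \<forall>y\<in>K. x + y \<in> K \<and> x - y \<in> K \<and> x * y \<in> K) \<and>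
     (\<forall>x\<in>K. x \<noteq> 0 \<longrightarrow> inverse x \<in> K)"

definition q_indep :: "complex list \<Rightarrow> bool" where
  "q_indep b \<longleftrightarrow> (\<forall>c :: nat \<Rightarrow> rat.
     (\<Sum>i<length b. of_rat (c i) * b ! i) = 0 \<longrightarrow> (\<forall>i<length b. c i = 0))"

definition q_basis :: "complex set \<Rightarrow> complex list \<Rightarrow> bool" where
  "q_basis K b \<longleftrightarrow> set b \<subseteq> K \<and> q_indep b \<and>
     (\<forall>x\<in>K. \<exists>c :: nat \<Rightarrow> rat. x = (\<Sum>i<length b. of_rat (c i) * b ! i))"

definition number_field :: "complex set \<Rightarrow> bool" where
  "number_field K \<longleftrightarrow> subfield_C K \<and> (\<exists>b. q_basis K b)"

definition degree_Q :: "complex set \<Rightarrow> nat" where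
  "degree_Q K = length (SOME b. q_basis K b)"

definition coord :: "complex list \<Rightarrow> complex \<Rightarrow> nat \<Rightarrow> rat" where
  "coord b x = (THE c. (\<forall>i. length b \<le> i \<longrightarrow> c i = 0) \<and>
                       x = (\<Sum>i<length b. of_rat (c i) * b ! i))"

text \<open>Trace Tr_{K/Q}(x): trace of the Q-linear map y \<mapsto> x*y on K.\<close>
definition trace_Q :: "complex set \<Rightarrow> complex \<Rightarrow> rat" where
  "trace_Q K x = (let b = (SOME b. q_basis K b) in
      \<Sum>j<length b. coord b (x * b ! j) j)"

definition gal :: "complex set \<Rightarrow> (complex \<Rightarrow> complex) set" where
  "gal K = {\<sigma>. bij_betw \<sigma> K K \<and> \<sigma> 1 = 1 \<and>
     (\<forall>x\<in>K. \<forall>y\<in>K. \<sigma> (x + y) = \<sigma> x + \<sigma> y \<and> \<sigma> (x * y) = \<sigma> x * \<sigma> y) \<and>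
     (\<forall>x. x \<notin> K \<longrightarrow> \<sigma> x = x)}"

definition galois :: "complex set \<Rightarrow> bool" where
  "galois K \<longleftrightarrow> finite (gal K) \<and> card (gal K) = degree_Q K"

definition ring_of_integers :: "complex set \<Rightarrow> complex set" where
  "ring_of_integers K = {x \<in> K. algebraic_int x}"

definition integral_basis :: "complex set \<Rightarrow> complex list \<Rightarrow> bool" where
  "integral_basis K w \<longleftrightarrow> set w \<subseteq> ring_of_integers K \<and> q_indep w \<and>
     (\<forall>x\<in>ring_of_integers K. \<exists>c :: nat \<Rightarrow> int. x = (\<Sum>i<length w. of_int (c i) * w ! i))"

definition disc :: "complex set \<Rightarrow> rat" where
  "disc K = (let w = (SOME w. integral_basis K w) in
     det (mat (length w) (length w) (\<lambda>(i, j). trace_Q K (w ! i * w ! j))))"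

end

theory Submission
  imports Defs "Jordan_Normal_Form.Char_Poly"
begin

context fixes K :: "complex set" assumes sf: "subfield_C K"
begin

lemma K_0: "0 \<in> K" and K_1: "1 \<in> K" using sf unfolding subfield_C_def by auto
lemma K_add: "x \<in> K \<Longrightarrow> y \<in> K \<Longrightarrow> x + y \<in> K" using sf unfolding subfield_C_def by auto
lemma K_diff: "x \<in> K \<Longrightarrow> y \<in> K \<Longrightarrow> x - y \<in> K" using sf unfolding subfield_C_def by auto
lemma K_mult: "x \<in> K \<Longrightarrow> y \<in> K \<Longrightarrow> x * y \<in> K" using sf unfolding subfield_C_def by auto
lemma K_inverse: "x \<in> K \<Longrightarrow> inverse x \<in> K"
  using sf K_0 unfolding subfield_C_def by (cases "x = 0") auto
lemma K_minus: "x \<in> K \<Longrightarrow> - x \<in> K" using K_diff[OF K_0] by fastforce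
lemma K_divide: "x \<in> K \<Longrightarrow> y \<in> K \<Longrightarrow> x / y \<in> K"
  unfolding divide_inverse by (intro K_mult K_inverse)
lemma K_of_nat: "of_nat m \<in> K"
  by (induction m) (auto intro: K_0 K_add K_1)
lemma K_of_int: "of_int k \<in> K"
  by (cases k rule: int_cases) (auto intro: K_of_nat K_minus simp del: of_nat_Suc)
lemma K_of_rat: "of_rat r \<in> K"
proof -
  obtain a b where "r = Rat.Fract a b" "b > 0" by (cases r) auto
  then have "of_rat r = (of_int a / of_int b :: complex)" by (simp add: of_rat_rat)
  then show ?thesis using K_divide K_of_int by simp
qed
lemma K_sum: "(\<And>i. i \<in> I \<Longrightarrow> f i \<in> K) \<Longrightarrow> sum f I \<in> K"
  by (induction I rule: infinite_finite_induct) (auto intro: K_0 K_add)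
lemma K_prod: "(\<And>i. i \<in> I \<Longrightarrow> f i \<in> K) \<Longrightarrow> prod f I \<in> K"
  by (induction I rule: infinite_finite_induct) (auto intro: K_1 K_mult)
lemma K_power: "x \<in> K \<Longrightarrow> x ^ m \<in> K"
  by (induction m) (auto intro: K_1 K_mult)
lemma K_qcomb: "(\<And>i. i \<in> I \<Longrightarrow> f i \<in> K) \<Longrightarrow> (\<Sum>i\<in>I. of_rat (c i) * f i) \<in> K"
  by (intro K_sum K_mult K_of_rat)

end

context fixes K :: "complex set" and \<sigma> assumes sf: "subfield_C K" and sg: "\<sigma> \<in> gal K"
begin

lemma gal_K: "x \<in> K \<Longrightarrow> \<sigma> x \<in> K" using sg unfolding gal_def bij_betw_def by auto
lemma gal_add: "x \<in> K \<Longrightarrow> y \<in> K \<Longrightarrow> \<sigma> (x + y) = \<sigma> x + \<sigma> y" using sg unfolding gal_def by auto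
lemma gal_mult: "x \<in> K \<Longrightarrow> y \<in> K \<Longrightarrow> \<sigma> (x * y) = \<sigma> x * \<sigma> y" using sg unfolding gal_def by auto
lemma gal_1: "\<sigma> 1 = 1" using sg unfolding gal_def by auto
lemma gal_out: "x \<notin> K \<Longrightarrow> \<sigma> x = x" using sg unfolding gal_def by auto
lemma gal_inj: "inj_on \<sigma> K" using sg unfolding gal_def bij_betw_def by auto
lemma gal_surj: "\<sigma> ` K = K" using sg unfolding gal_def bij_betw_def by auto
lemma gal_0: "\<sigma> 0 = 0"
proof -
  have "\<sigma> (0 + 0) = \<sigma> 0 + \<sigma> 0" using gal_add K_0[OF sf] by blast
  then show ?thesis by simp
qed
lemma gal_minus: "x \<in> K \<Longrightarrow> \<sigma> (- x) = - \<sigma> x"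
proof -
  assume x: "x \<in> K"
  have "\<sigma> (x + - x) = \<sigma> x + \<sigma> (- x)" using gal_add x K_minus[OF sf] by blast
  then show ?thesis using gal_0 by (simp add: eq_neg_iff_add_eq_0 add.commute)
qed
lemma gal_diff: "x \<in> K \<Longrightarrow> y \<in> K \<Longrightarrow> \<sigma> (x - y) = \<sigma> x - \<sigma> y"
  using gal_add[of x "- y"] gal_minus[of y] K_minus[OF sf, of y] by simp
lemma gal_of_nat: "\<sigma> (of_nat m) = of_nat m"
proof (induction m)
  case 0 then show ?case using gal_0 by simp
next
  case (Suc m)
  have "\<sigma> (1 + of_nat m) = \<sigma> 1 + \<sigma> (of_nat m)" using gal_add K_1[OF sf] K_of_nat[OF sf] by blast
  then show ?case using Suc gal_1 by simp
qed
lemma gal_of_int: "\<sigma> (of_int k) = of_int k"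
  by (cases k rule: int_cases) (auto simp: gal_of_nat gal_minus K_of_nat[OF sf] simp del: of_nat_Suc)
lemma gal_nonzero: "x \<in> K \<Longrightarrow> x \<noteq> 0 \<Longrightarrow> \<sigma> x \<noteq> 0"
  using gal_inj gal_0 K_0[OF sf] unfolding inj_on_def by metis
lemma gal_of_rat: "\<sigma> (of_rat r) = of_rat r"
proof -
  obtain a b where r: "r = Rat.Fract a b" and b: "b > 0" by (cases r) auto
  then have eq: "(of_rat r :: complex) * of_int b = of_int a" by (simp add: of_rat_rat)
  have "\<sigma> (of_rat r * of_int b) = \<sigma> (of_rat r) * of_int b"
    using gal_mult K_of_rat[OF sf] K_of_int[OF sf] gal_of_int by metis
  then have "\<sigma> (of_rat r) * of_int b = of_int a" using eq gal_of_int by metis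
  then have "\<sigma> (of_rat r) * of_int b = of_rat r * of_int b" using eq by simp
  then show ?thesis using b by simp
qed
lemma gal_sum: "(\<And>i. i \<in> I \<Longrightarrow> f i \<in> K) \<Longrightarrow> \<sigma> (sum f I) = (\<Sum>i\<in>I. \<sigma> (f i))"
  by (induction I rule: infinite_finite_induct) (auto simp: gal_0 gal_add K_sum[OF sf])
lemma gal_prod: "(\<And>i. i \<in> I \<Longrightarrow> f i \<in> K) \<Longrightarrow> \<sigma> (prod f I) = (\<Prod>i\<in>I. \<sigma> (f i))"
  by (induction I rule: infinite_finite_induct) (auto simp: gal_1 gal_mult K_prod[OF sf])
lemma gal_power: "x \<in> K \<Longrightarrow> \<sigma> (x ^ m) = \<sigma> x ^ m"
  by (induction m) (auto simp: gal_1 gal_mult K_power[OF sf])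
lemma gal_qcomb: "(\<And>i. i \<in> I \<Longrightarrow> f i \<in> K) \<Longrightarrow>
   \<sigma> (\<Sum>i\<in>I. of_rat (c i) * f i) = (\<Sum>i\<in>I. of_rat (c i) * \<sigma> (f i))"
  by (subst gal_sum) (auto intro!: sum.cong simp: gal_mult K_of_rat[OF sf] K_mult[OF sf] gal_of_rat)
lemma gal_icomb: "(\<And>i. i \<in> I \<Longrightarrow> f i \<in> K) \<Longrightarrow>
   \<sigma> (\<Sum>i\<in>I. of_int (c i) * f i) = (\<Sum>i\<in>I. of_int (c i) * \<sigma> (f i))"
  by (subst gal_sum) (auto intro!: sum.cong simp: gal_mult K_of_int[OF sf] K_mult[OF sf] gal_of_int)

lemma gal_alg_int: assumes "x \<in> K" "algebraic_int x" shows "algebraic_int (\<sigma> x)"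
proof -
  from assms(2) obtain p where p: "lead_coeff p = 1" "\<forall>i. coeff p i \<in> \<int>" "poly p x = 0"
    by (auto elim: algebraic_int.cases)
  have cK: "coeff p i \<in> K" for i using p(2) K_of_int[OF sf] by (metis Ints_cases)
  have cs: "\<sigma> (coeff p i) = coeff p i" for i using p(2) gal_of_int by (metis Ints_cases)
  have "\<sigma> (poly p x) = poly p (\<sigma> x)"
    unfolding poly_altdef
    by (subst gal_sum) (auto intro!: sum.cong K_mult[OF sf] K_power[OF sf] cK assms(1)
        simp: gal_mult[OF cK K_power[OF sf assms(1)]] gal_power[OF assms(1)] cs)
  then have "poly p (\<sigma> x) = 0" using p(3) gal_0 by simp
  then show ?thesis using p by (intro algebraic_int.intros) auto
qed

end

lemma gal_comp: assumes sf: "subfield_C K" and s: "\<sigma> \<in> gal K" and t: "\<tau> \<in> gal K"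
  shows "\<sigma> \<circ> \<tau> \<in> gal K"
proof -
  have "bij_betw (\<sigma> \<circ> \<tau>) K K" using s t unfolding gal_def using bij_betw_trans by blast
  moreover have "(\<sigma> \<circ> \<tau>) 1 = 1" using gal_1[OF sf s] gal_1[OF sf t] by simp
  moreover have "\<forall>x\<in>K. \<forall>y\<in>K. (\<sigma> \<circ> \<tau>) (x + y) = (\<sigma> \<circ> \<tau>) x + (\<sigma> \<circ> \<tau>) y \<and>
      (\<sigma> \<circ> \<tau>) (x * y) = (\<sigma> \<circ> \<tau>) x * (\<sigma> \<circ> \<tau>) y"
    using gal_add[OF sf] gal_mult[OF sf] gal_K[OF sf] s t by simp
  moreover have "\<forall>x. x \<notin> K \<longrightarrow> (\<sigma> \<circ> \<tau>) x = x" using gal_out[OF sf s] gal_out[OF sf t] by simp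
  ultimately show ?thesis unfolding gal_def by blast
qed

lemma gal_eq: assumes sf: "subfield_C K" and s: "\<sigma> \<in> gal K" and t: "\<tau> \<in> gal K"
  and eq: "\<And>x. x \<in> K \<Longrightarrow> \<sigma> x = \<tau> x" shows "\<sigma> = \<tau>"
proof
  fix x show "\<sigma> x = \<tau> x" using eq gal_out[OF sf s] gal_out[OF sf t] by (cases "x \<in> K") auto
qed

lemma gal_comp_right_inj: assumes sf: "subfield_C K" and r: "\<rho> \<in> gal K"
  shows "inj_on (\<lambda>\<tau>. \<tau> \<circ> \<rho>) (gal K)"
proof (rule inj_onI)
  fix s t assume s: "s \<in> gal K" and t: "t \<in> gal K" and eq: "s \<circ> \<rho> = t \<circ> \<rho>"
  show "s = t"
  proof (rule gal_eq[OF sf s t])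
    fix x assume x: "x \<in> K"
    then obtain y where "y \<in> K" "x = \<rho> y" using gal_surj[OF sf r] by blast
    then show "s x = t x" using eq by (metis comp_apply)
  qed
qed

lemma gal_comp_right_bij: assumes sf: "subfield_C K" and r: "\<rho> \<in> gal K" and fin: "finite (gal K)"
  shows "(\<lambda>\<tau>. \<tau> \<circ> \<rho>) ` gal K = gal K"
  using endo_inj_surj[OF fin _ gal_comp_right_inj[OF sf r]] gal_comp[OF sf _ r] by blast

interpretation Q: vector_space "\<lambda>(r::rat) (x::complex). of_rat r * x"
  by unfold_locales (simp_all add: algebra_simps of_rat_add of_rat_mult)

lemma sum_set_nth: "distinct b \<Longrightarrow> (\<Sum>v\<in>set b. f v) = (\<Sum>i<length b. f (b ! i))"
  using sum.reindex_bij_betw[OF bij_betw_nth[of b "{..<length b}" "set b"], of f] by simp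

lemma q_indep_distinct: assumes "q_indep b" shows "distinct b"
proof (rule ccontr)
  assume "\<not> distinct b"
  then obtain i j where ij: "i < length b" "j < length b" "i \<noteq> j" "b ! i = b ! j"
    by (auto simp: distinct_conv_nth)
  define c where "c = (\<lambda>k. if k = i then 1 else if k = j then -1 else (0::rat))"
  have "of_rat (c k) * b ! k = (if k = i then b ! i else 0) - (if k = j then b ! j else 0)" for k
    using ij unfolding c_def by auto
  then have "(\<Sum>k<length b. of_rat (c k) * b ! k) = b ! i - b ! j"
    using ij by (simp add: sum_subtractf)
  then have "(\<Sum>k<length b. of_rat (c k) * b ! k) = 0" using ij by simp
  then have "c i = 0" using assms ij unfolding q_indep_def by blast
  then show False unfolding c_def by simp
qed

lemma q_indep_independent: assumes "q_indep b" shows "Q.independent (set b)"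
proof
  assume "Q.dependent (set b)"
  then obtain u where u: "\<exists>v\<in>set b. u v \<noteq> 0" "(\<Sum>v\<in>set b. of_rat (u v) * v) = 0"
    unfolding Q.dependent_finite[OF finite_set] by blast
  have "(\<Sum>i<length b. of_rat (u (b ! i)) * b ! i) = 0"
    using u(2) sum_set_nth[OF q_indep_distinct[OF assms], of "\<lambda>v. of_rat (u v) * v"] by simp
  then have "\<forall>i<length b. u (b ! i) = 0"
    using assms[unfolded q_indep_def, rule_format, of "\<lambda>i. u (b ! i)"] by blast
  then show False using u(1) by (auto simp: in_set_conv_nth)
qed

lemma span_comb: assumes "distinct b" "x \<in> Q.span (set b)"
  shows "\<exists>c. x = (\<Sum>i<length b. of_rat (c i) * b ! i)"
proof -
  have "x \<in> range (\<lambda>u. \<Sum>v\<in>set b. of_rat (u v) * v)"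
    using assms(2) Q.span_finite[OF finite_set] by simp
  then obtain u where "x = (\<Sum>v\<in>set b. of_rat (u v) * v)" by blast
  then have "x = (\<Sum>i<length b. of_rat (u (b ! i)) * b ! i)"
    using sum_set_nth[OF assms(1), of "\<lambda>v. of_rat (u v) * v"] by simp
  then show ?thesis by (rule exI[of _ "\<lambda>i. u (b ! i)"])
qed

lemma comb_span: "(\<Sum>i<length b. of_rat (c i) * b ! i) \<in> Q.span (set b)"
  by (intro Q.span_sum Q.span_scale Q.span_base) auto

lemma K_subspace: "subfield_C K \<Longrightarrow> Q.subspace K"
  unfolding Q.subspace_def by (auto intro: K_0 K_add K_mult K_of_rat)

lemma q_basis_span: assumes sf: "subfield_C K" and qb: "q_basis K b" shows "Q.span (set b) = K"
proof
  have "set b \<subseteq> K" using qb unfolding q_basis_def by blast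
  then show "Q.span (set b) \<subseteq> K" by (rule Q.span_minimal[OF _ K_subspace[OF sf]])
  show "K \<subseteq> Q.span (set b)"
  proof
    fix x assume "x \<in> K"
    then obtain c where "x = (\<Sum>i<length b. of_rat (c i) * b ! i)" using qb unfolding q_basis_def by blast
    then show "x \<in> Q.span (set b)" using comb_span by simp
  qed
qed

lemma q_basis_length: assumes sf: "subfield_C K" and qb: "q_basis K b" and qb': "q_basis K b'"
  shows "length b = length b'"
proof -
  have "length b = card (set b)" using q_indep_distinct qb unfolding q_basis_def by (simp add: distinct_card)
  also have "\<dots> = Q.dim K" using Q.dim_span_eq_card_independent[of "set b"] q_indep_independent qb
      q_basis_span[OF sf qb] unfolding q_basis_def by simp
  also have "\<dots> = card (set b')" using Q.dim_span_eq_card_independent[of "set b'"] q_indep_independent qb'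
      q_basis_span[OF sf qb'] unfolding q_basis_def by simp
  also have "\<dots> = length b'" using q_indep_distinct qb' unfolding q_basis_def by (simp add: distinct_card)
  finally show ?thesis .
qed

lemma q_indep_basis: assumes sf: "subfield_C K" and qb: "q_basis K b" and ind: "q_indep w"
  and wK: "set w \<subseteq> K" and len: "length w = length b" shows "q_basis K w"
proof -
  have dw: "distinct w" by (rule q_indep_distinct[OF ind])
  have db: "distinct b" using q_indep_distinct qb unfolding q_basis_def by blast
  have "x \<in> Q.span (set w)" if x: "x \<in> K" for x
  proof (rule ccontr)
    assume nx: "x \<notin> Q.span (set w)"
    then have "x \<notin> set w" using Q.span_base by blast
    have "Q.independent (insert x (set w))" using Q.independent_insertI[OF nx q_indep_independent[OF ind]] .
    moreover have "insert x (set w) \<subseteq> Q.span (set b)" using q_basis_span[OF sf qb] x wK by blast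
    ultimately have "card (insert x (set w)) \<le> card (set b)" using Q.independent_span_bound by blast
    then show False using \<open>x \<notin> set w\<close> dw db len by (simp add: distinct_card)
  qed
  then have "\<forall>x\<in>K. \<exists>c. x = (\<Sum>i<length w. of_rat (c i) * w ! i)"
    using span_comb[OF dw] by blast
  then show ?thesis using ind wK unfolding q_basis_def by blast
qed

lemma coord_eq: assumes ind: "q_indep b" and x: "x = (\<Sum>i<length b. of_rat (c i) * b ! i)"
  and i: "i < length b" shows "coord b x i = c i"
proof -
  let ?P = "\<lambda>c. (\<forall>i. length b \<le> i \<longrightarrow> c i = 0) \<and> x = (\<Sum>i<length b. of_rat (c i) * b ! i)"
  define c0 where "c0 = (\<lambda>i. if i < length b then c i else 0)"
  have P0: "?P c0" using x unfolding c0_def by auto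
  have uniq: "d = c0" if "?P d" for d
  proof
    fix k
    have dx: "x = (\<Sum>i<length b. of_rat (d i) * b ! i)" using that by blast
    have "(\<Sum>i<length b. of_rat (d i - c0 i) * b ! i) =
       (\<Sum>i<length b. of_rat (d i) * b ! i) - (\<Sum>i<length b. of_rat (c0 i) * b ! i)"
      by (simp add: of_rat_diff left_diff_distrib sum_subtractf)
    also have "\<dots> = 0" using dx P0 by simp
    finally have "(\<Sum>i<length b. of_rat (d i - c0 i) * b ! i) = 0" .
    then have "\<forall>i<length b. d i - c0 i = 0" using ind[unfolded q_indep_def, rule_format, of "\<lambda>i. d i - c0 i"] by blast
    then show "d k = c0 k" using that P0 by (cases "k < length b") auto
  qed
  have ex: "\<exists>!d. ?P d" by (rule ex1I[of _ c0]) (use P0 uniq in auto)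
  have "coord b x = c0" unfolding coord_def by (rule the1_equality[OF ex]) (rule P0)
  then have "coord b x i = c0 i" by (rule fun_cong)
  also have "c0 i = c i" using i unfolding c0_def by (rule if_P)
  finally show ?thesis .
qed

lemma coord_repr: assumes qb: "q_basis K b" and x: "x \<in> K"
  shows "x = (\<Sum>i<length b. of_rat (coord b x i) * b ! i)"
proof -
  obtain c where c: "x = (\<Sum>i<length b. of_rat (c i) * b ! i)" using qb x unfolding q_basis_def by blast
  have ind: "q_indep b" using qb unfolding q_basis_def by blast
  have ci: "coord b x i = c i" if "i < length b" for i
    using coord_eq[OF ind c that] .
  have "(\<Sum>i<length b. of_rat (coord b x i) * b ! i) = (\<Sum>i<length b. of_rat (c i) * b ! i)"
    by (rule sum.cong) (auto simp: ci)
  then show ?thesis using c by metis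
qed

section \<open>Independence of characters\<close>

lemma artin:
  assumes sf: "subfield_C K" and fin: "finite I"
  shows "inj_on \<sigma> I \<Longrightarrow> (\<forall>i\<in>I. \<sigma> i \<in> gal K) \<Longrightarrow> (\<forall>x\<in>K. (\<Sum>i\<in>I. c i * \<sigma> i x) = 0)
     \<Longrightarrow> \<forall>i\<in>I. c i = 0"
  using fin
proof (induction I arbitrary: c rule: finite_induct)
  case empty then show ?case by simp
next
  case (insert i0 I)
  have s0: "\<sigma> i0 \<in> gal K" using insert.prems by simp
  have sI: "\<And>i. i \<in> I \<Longrightarrow> \<sigma> i \<in> gal K" using insert.prems by simp
  have injI: "inj_on \<sigma> I" and ni: "\<sigma> i0 \<notin> \<sigma> ` I" using insert.prems(1) insert.hyps(2) by auto
  have relx: "c i0 * \<sigma> i0 x + (\<Sum>i\<in>I. c i * \<sigma> i x) = 0" if x: "x \<in> K" for x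
    using insert.prems(3) x insert.hyps by (simp add: sum.insert)
  have relI: "\<forall>x\<in>K. (\<Sum>i\<in>I. (c i * (\<sigma> i y - \<sigma> i0 y)) * \<sigma> i x) = 0" if y: "y \<in> K" for y
  proof
    fix x assume x: "x \<in> K"
    have "(\<Sum>i\<in>I. c i * \<sigma> i (y * x)) = (\<Sum>i\<in>I. c i * (\<sigma> i y * \<sigma> i x))"
      by (rule sum.cong) (auto simp: gal_mult[OF sf sI y x])
    moreover have "\<sigma> i0 (y * x) = \<sigma> i0 y * \<sigma> i0 x" by (rule gal_mult[OF sf s0 y x])
    ultimately have e1: "c i0 * (\<sigma> i0 y * \<sigma> i0 x) + (\<Sum>i\<in>I. c i * (\<sigma> i y * \<sigma> i x)) = 0"
      using relx[OF K_mult[OF sf y x]] by simp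
    have e2: "c i0 * \<sigma> i0 x + (\<Sum>i\<in>I. c i * \<sigma> i x) = 0" by (rule relx[OF x])
    have "(\<Sum>i\<in>I. (c i * (\<sigma> i y - \<sigma> i0 y)) * \<sigma> i x) =
        (\<Sum>i\<in>I. c i * (\<sigma> i y * \<sigma> i x)) - \<sigma> i0 y * (\<Sum>i\<in>I. c i * \<sigma> i x)"
      by (simp add: sum_subtractf sum_distrib_left algebra_simps)
    also have "\<dots> = 0"
    proof -
      have h1: "(\<Sum>i\<in>I. c i * (\<sigma> i y * \<sigma> i x)) = - (c i0 * (\<sigma> i0 y * \<sigma> i0 x))"
        using e1 by (simp only: add_eq_0_iff)
      have h2: "(\<Sum>i\<in>I. c i * \<sigma> i x) = - (c i0 * \<sigma> i0 x)"
        using e2 by (simp only: add_eq_0_iff)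
      show ?thesis unfolding h1 h2 by (simp add: algebra_simps)
    qed
    finally show "(\<Sum>i\<in>I. (c i * (\<sigma> i y - \<sigma> i0 y)) * \<sigma> i x) = 0" .
  qed
  have cI: "c i = 0" if i: "i \<in> I" for i
  proof -
    have "\<sigma> i \<noteq> \<sigma> i0" using ni i by (metis image_eqI)
    then obtain y where y: "y \<in> K" "\<sigma> i y \<noteq> \<sigma> i0 y" using gal_eq[OF sf sI[OF i] s0] by blast
    have "\<forall>i\<in>I. c i * (\<sigma> i y - \<sigma> i0 y) = 0"
      using insert.IH[OF injI, of "\<lambda>i. c i * (\<sigma> i y - \<sigma> i0 y)"] relI[OF y(1)] sI by blast
    then have "c i * (\<sigma> i y - \<sigma> i0 y) = 0" using i by blast
    then show ?thesis using y(2) by simp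
  qed
  have "c i0 * \<sigma> i0 1 + (\<Sum>i\<in>I. c i * \<sigma> i 1) = 0" by (rule relx[OF K_1[OF sf]])
  then have "c i0 = 0" using cI gal_1[OF sf s0] by simp
  then show ?case using cI by simp
qed

section \<open>The embedding matrix\<close>

definition Wm :: "(nat \<Rightarrow> complex \<Rightarrow> complex) \<Rightarrow> nat \<Rightarrow> complex list \<Rightarrow> complex mat" where
  "Wm \<sigma> n w = mat n n (\<lambda>(i,k). \<sigma> i (w ! k))"

lemma Wm_carrier[simp]: "Wm \<sigma> n w \<in> carrier_mat n n" unfolding Wm_def by simp

lemma Wm_dims[simp]: "dim_row (Wm \<sigma> n w) = n" "dim_col (Wm \<sigma> n w) = n" unfolding Wm_def by simp_all

lemma Wm_index[simp]: "i < n \<Longrightarrow> k < n \<Longrightarrow> Wm \<sigma> n w $$ (i,k) = \<sigma> i (w ! k)"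
  unfolding Wm_def by simp

lemma bij_gal: "bij_betw \<sigma> {..<n} (gal K) \<Longrightarrow> i < n \<Longrightarrow> \<sigma> i \<in> gal K"
  unfolding bij_betw_def by auto

lemma Wm_det_nz: assumes sf: "subfield_C K" and bij: "bij_betw \<sigma> {..<n} (gal K)"
  and qb: "q_basis K w" and len: "length w = n"
  shows "det (Wm \<sigma> n w) \<noteq> 0"
proof
  let ?W = "Wm \<sigma> n w"
  assume "det ?W = 0"
  then have "det (transpose_mat ?W) = 0" using det_transpose[OF Wm_carrier] by simp
  then obtain v where v: "v \<in> carrier_vec n" "v \<noteq> 0\<^sub>v n" "transpose_mat ?W *\<^sub>v v = 0\<^sub>v n"
    using det_0_iff_vec_prod_zero[of "transpose_mat ?W" n] by auto
  have vk: "(\<Sum>i<n. v $ i * \<sigma> i (w ! k)) = 0" if k: "k < n" for k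
  proof -
    have "(transpose_mat ?W *\<^sub>v v) $ k = 0" using v(3) k by simp
    moreover have "(transpose_mat ?W *\<^sub>v v) $ k = (\<Sum>i\<in>{0..<n}. ?W $$ (i,k) * v $ i)"
      using k v(1) by (simp add: scalar_prod_def)
    moreover have "(\<Sum>i\<in>{0..<n}. ?W $$ (i,k) * v $ i) = (\<Sum>i<n. v $ i * \<sigma> i (w ! k))"
      by (rule sum.cong) (use k in \<open>auto simp: atLeast0LessThan\<close>)
    ultimately show ?thesis by simp
  qed
  have wK: "w ! k \<in> K" if "k < n" for k using qb that len unfolding q_basis_def by auto
  have rel: "\<forall>x\<in>K. (\<Sum>i\<in>{..<n}. v $ i * \<sigma> i x) = 0"
  proof
    fix x assume x: "x \<in> K"
    obtain c where c0: "x = (\<Sum>k<length w. of_rat (c k) * w ! k)" using qb x unfolding q_basis_def by blast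
    have c: "x = (\<Sum>k<n. of_rat (c k) * w ! k)" using c0 len by simp
    have sx: "\<sigma> i x = (\<Sum>k<n. of_rat (c k) * \<sigma> i (w ! k))" if i: "i < n" for i
      by (subst c) (rule gal_qcomb[OF sf bij_gal[OF bij i]], simp add: wK)
    have "(\<Sum>i<n. v $ i * \<sigma> i x) = (\<Sum>i<n. v $ i * (\<Sum>k<n. of_rat (c k) * \<sigma> i (w ! k)))"
      by (rule sum.cong) (auto simp: sx)
    also have "\<dots> = (\<Sum>i<n. \<Sum>k<n. of_rat (c k) * (v $ i * \<sigma> i (w ! k)))"
      by (simp add: sum_distrib_left mult.left_commute)
    also have "\<dots> = (\<Sum>k<n. \<Sum>i<n. of_rat (c k) * (v $ i * \<sigma> i (w ! k)))"
      by (rule sum.swap)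
    also have "\<dots> = (\<Sum>k<n. of_rat (c k) * (\<Sum>i<n. v $ i * \<sigma> i (w ! k)))"
      by (simp add: sum_distrib_left)
    also have "\<dots> = 0" using vk by simp
    finally show "(\<Sum>i\<in>{..<n}. v $ i * \<sigma> i x) = 0" .
  qed
  have inj: "inj_on \<sigma> {..<n}" using bij by (simp add: bij_betw_def)
  have sg: "\<forall>i\<in>{..<n}. \<sigma> i \<in> gal K" using bij_gal[OF bij] by simp
  have "\<forall>i\<in>{..<n}. v $ i = 0" by (rule artin[OF sf finite_lessThan inj sg rel])
  then have "v = 0\<^sub>v n" using v(1) by (intro eq_vecI) auto
  then show False using v(2) by simp
qed

section \<open>Trace formula\<close>

definition mtr :: "nat \<Rightarrow> complex mat \<Rightarrow> complex" where
  "mtr n A = (\<Sum>i<n. A $$ (i,i))"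

lemma mtr_comm: assumes "A \<in> carrier_mat n n" "B \<in> carrier_mat n n"
  shows "mtr n (A * B) = mtr n (B * A)"
proof -
  have "mtr n (A * B) = (\<Sum>i<n. \<Sum>k<n. A $$ (i,k) * B $$ (k,i))"
    using assms by (simp add: mtr_def scalar_prod_def atLeast0LessThan)
  also have "\<dots> = (\<Sum>k<n. \<Sum>i<n. B $$ (k,i) * A $$ (i,k))"
    by (subst sum.swap) (simp add: mult.commute)
  also have "\<dots> = mtr n (B * A)"
    using assms by (simp add: mtr_def scalar_prod_def atLeast0LessThan)
  finally show ?thesis .
qed

lemma mtr_smult: "A \<in> carrier_mat n n \<Longrightarrow> mtr n (a \<cdot>\<^sub>m A) = a * mtr n A"
  by (simp add: mtr_def sum_distrib_left)

lemma number_field_basis: "number_field K \<Longrightarrow> q_basis K (SOME b. q_basis K b)"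
  unfolding number_field_def by (metis someI_ex)

lemma trace_formula: assumes nf: "number_field K" and bij: "bij_betw \<sigma> {..<n} (gal K)"
  and n: "n = degree_Q K" and x: "x \<in> K"
  shows "of_rat (trace_Q K x) = (\<Sum>i<n. \<sigma> i x)"
proof -
  have sf: "subfield_C K" using nf unfolding number_field_def by blast
  define b0 where "b0 = (SOME b. q_basis K b)"
  have qb: "q_basis K b0" unfolding b0_def by (rule number_field_basis[OF nf])
  have len: "length b0 = n" unfolding n degree_Q_def b0_def ..
  have bK: "b0 ! k \<in> K" if "k < n" for k using qb that len unfolding q_basis_def by auto
  define M where "M = mat n n (\<lambda>(k,j). of_rat (coord b0 (x * b0 ! j) k) :: complex)"
  define B where "B = Wm \<sigma> n b0"
  define D where "D = mat n n (\<lambda>(i,j). if i = j then \<sigma> i x else 0)"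
  have cM: "M \<in> carrier_mat n n" and cB: "B \<in> carrier_mat n n" and cD: "D \<in> carrier_mat n n"
    unfolding M_def B_def D_def by auto
  have BM: "B * M = D * B"
  proof (rule eq_matI)
    fix i j assume i: "i < dim_row (D * B)" and j: "j < dim_col (D * B)"
    then have i: "i < n" and j: "j < n" using cB cD by auto
    have si: "\<sigma> i \<in> gal K" using bij_gal[OF bij i] .
    have "(B * M) $$ (i,j) = (\<Sum>k<n. \<sigma> i (b0 ! k) * of_rat (coord b0 (x * b0 ! j) k))"
      using i j unfolding B_def M_def by (simp add: scalar_prod_def atLeast0LessThan)
    also have "\<dots> = \<sigma> i (\<Sum>k<n. of_rat (coord b0 (x * b0 ! j) k) * b0 ! k)"
      by (subst gal_qcomb[OF sf si bK]) (auto simp: mult.commute)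
    also have "(\<Sum>k<n. of_rat (coord b0 (x * b0 ! j) k) * b0 ! k) = x * b0 ! j"
      using coord_repr[OF qb K_mult[OF sf x bK[OF j]]] len by simp
    also have "\<sigma> i (x * b0 ! j) = \<sigma> i x * \<sigma> i (b0 ! j)" by (rule gal_mult[OF sf si x bK[OF j]])
    also have "\<dots> = (D * B) $$ (i,j)"
      using i j unfolding B_def D_def
      by (simp add: scalar_prod_def atLeast0LessThan if_distrib[of "\<lambda>t. t * _"] sum.delta cong: if_cong)
    finally show "(B * M) $$ (i,j) = (D * B) $$ (i,j)" .
  qed (use cB cD cM in auto)
  have dB: "det B \<noteq> 0" unfolding B_def using Wm_det_nz[OF sf bij qb len] .
  obtain A where A: "A = adj_mat B" by blast
  have cA: "A \<in> carrier_mat n n" and AB: "A * B = det B \<cdot>\<^sub>m 1\<^sub>m n" and BA: "B * A = det B \<cdot>\<^sub>m 1\<^sub>m n"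
    using adj_mat[OF cB] A by auto
  have "det B * mtr n M = mtr n (det B \<cdot>\<^sub>m M)" using mtr_smult[OF cM] by simp
  also have "det B \<cdot>\<^sub>m M = (A * B) * M" using AB cM by (simp add: mult_smult_assoc_mat[of _ n n M n])
  also have "\<dots> = A * (D * B)" using BM cA cB cM by (simp add: assoc_mult_mat[of A n n B n M n])
  also have "mtr n \<dots> = mtr n ((A * D) * B)" using cA cB cD by (simp add: assoc_mult_mat[of A n n D n B n])
  also have "\<dots> = mtr n (B * (A * D))" using cA cB cD by (intro mtr_comm) auto
  also have "B * (A * D) = (B * A) * D" using cA cB cD by (simp add: assoc_mult_mat[of B n n A n D n])
  also have "\<dots> = det B \<cdot>\<^sub>m D" using BA cD by (simp add: mult_smult_assoc_mat[of _ n n D n])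
  also have "mtr n \<dots> = det B * mtr n D" using mtr_smult[OF cD] .
  finally have "mtr n M = mtr n D" using dB by simp
  moreover have "mtr n M = of_rat (trace_Q K x)"
    unfolding mtr_def M_def trace_Q_def Let_def b0_def[symmetric] len by (simp add: of_rat_sum)
  moreover have "mtr n D = (\<Sum>i<n. \<sigma> i x)" unfolding mtr_def D_def by simp
  ultimately show ?thesis by simp
qed

lemma disc_mat: assumes nf: "number_field K" and bij: "bij_betw \<sigma> {..<n} (gal K)"
  and n: "n = degree_Q K" and wK: "set w \<subseteq> K" and len: "length w = n"
  shows "of_rat (det (mat n n (\<lambda>(i,j). trace_Q K (w ! i * w ! j)))) = det (Wm \<sigma> n w) ^ 2"
proof -
  have sf: "subfield_C K" using nf unfolding number_field_def by blast
  have wK': "w ! k \<in> K" if "k < n" for k using wK that len by auto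
  let ?W = "Wm \<sigma> n w"
  have "map_mat of_rat (mat n n (\<lambda>(i,j). trace_Q K (w ! i * w ! j))) = transpose_mat ?W * ?W"
  proof (rule eq_matI)
    fix i j assume "i < dim_row (transpose_mat ?W * ?W)" "j < dim_col (transpose_mat ?W * ?W)"
    then have i: "i < n" and j: "j < n" by auto
    have "of_rat (trace_Q K (w ! i * w ! j)) = (\<Sum>k<n. \<sigma> k (w ! i * w ! j))"
      by (rule trace_formula[OF nf bij n K_mult[OF sf wK'[OF i] wK'[OF j]]])
    also have "\<dots> = (\<Sum>k<n. \<sigma> k (w ! i) * \<sigma> k (w ! j))"
      by (rule sum.cong) (auto simp: gal_mult[OF sf bij_gal[OF bij] wK'[OF i] wK'[OF j]])
    also have "\<dots> = (transpose_mat ?W * ?W) $$ (i,j)"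
      using i j by (simp add: scalar_prod_def atLeast0LessThan)
    finally show "map_mat of_rat (mat n n (\<lambda>(i,j). trace_Q K (w ! i * w ! j))) $$ (i,j) = (transpose_mat ?W * ?W) $$ (i,j)"
      using i j by simp
  qed auto
  then have "of_rat (det (mat n n (\<lambda>(i,j). trace_Q K (w ! i * w ! j)))) = det (transpose_mat ?W * ?W)"
    by (metis of_rat_hom.hom_det)
  also have "\<dots> = det ?W ^ 2"
    using det_mult[of "transpose_mat ?W" n ?W] det_transpose[of ?W n] by (simp add: power2_eq_square)
  finally show ?thesis .
qed

section \<open>Integer spans and the determinant trick\<close>

definition zspan :: "complex set \<Rightarrow> complex set" where
  "zspan S = {(\<Sum>s\<in>S. of_int (c s) * s) | c. True}"

lemma zspanI: "a = (\<Sum>s\<in>S. of_int (c s) * s) \<Longrightarrow> a \<in> zspan S"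
  unfolding zspan_def by blast

lemma zspan_add: "a \<in> zspan S \<Longrightarrow> b \<in> zspan S \<Longrightarrow> a + b \<in> zspan S"
proof -
  assume "a \<in> zspan S" "b \<in> zspan S"
  then obtain c d where "a = (\<Sum>s\<in>S. of_int (c s) * s)" "b = (\<Sum>s\<in>S. of_int (d s) * s)"
    unfolding zspan_def by blast
  then have "a + b = (\<Sum>s\<in>S. of_int (c s + d s) * s)" by (simp add: sum.distrib algebra_simps)
  then show ?thesis by (rule zspanI)
qed

lemma zspan_smult: "a \<in> zspan S \<Longrightarrow> of_int k * a \<in> zspan S"
proof -
  assume "a \<in> zspan S"
  then obtain c where "a = (\<Sum>s\<in>S. of_int (c s) * s)" unfolding zspan_def by blast
  then have "of_int k * a = (\<Sum>s\<in>S. of_int (k * c s) * s)" by (simp add: sum_distrib_left algebra_simps)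
  then show ?thesis by (rule zspanI)
qed

lemma zspan_0: "0 \<in> zspan S"
proof -
  have "0 = (\<Sum>s\<in>S. of_int ((\<lambda>_. 0::int) s) * s)" by simp
  then show ?thesis by (rule zspanI)
qed

lemma zspan_base: assumes "finite S" "t \<in> S" shows "t \<in> zspan S"
proof -
  have "(\<Sum>s\<in>S. of_int ((\<lambda>s. if s = t then 1 else 0) s) * s) = t"
    using assms by (simp add: if_distrib[of "\<lambda>x. of_int x * _"] cong: if_cong)
  then show ?thesis by (intro zspanI) (rule sym)
qed

lemma zspan_sum: "(\<And>i. i \<in> I \<Longrightarrow> f i \<in> zspan S) \<Longrightarrow> sum f I \<in> zspan S"
  by (induction I rule: infinite_finite_induct) (auto intro: zspan_0 zspan_add)

lemma zspan_mult_closed: assumes fin: "finite S" and cl: "\<And>s. s \<in> S \<Longrightarrow> z * s \<in> zspan S"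
  and a: "a \<in> zspan S" shows "z * a \<in> zspan S"
proof -
  obtain c where "a = (\<Sum>s\<in>S. of_int (c s) * s)" using a unfolding zspan_def by blast
  then have "z * a = (\<Sum>s\<in>S. of_int (c s) * (z * s))" by (simp add: sum_distrib_left algebra_simps)
  also have "\<dots> \<in> zspan S" by (intro zspan_sum zspan_smult cl)
  finally show ?thesis .
qed

lemma sum_set_nth': "distinct b \<Longrightarrow> (\<Sum>v\<in>set b. f v) = (\<Sum>i<length b. f (b ! i))"
  using sum.reindex_bij_betw[OF bij_betw_nth[of b "{..<length b}" "set b"], of f] by simp

lemma det_trick: assumes fin: "finite S" and nz: "s0 \<in> S" "s0 \<noteq> 0"
  and cl: "\<And>s. s \<in> S \<Longrightarrow> z * s \<in> zspan S"
  shows "algebraic_int z"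
proof -
  obtain g where g: "set g = S" "distinct g" using finite_distinct_list[OF fin] by blast
  define m where "m = length g"
  have "\<forall>k. \<exists>c. k < m \<longrightarrow> z * g ! k = (\<Sum>s\<in>S. of_int (c s) * s)"
  proof
    fix k
    show "\<exists>c. k < m \<longrightarrow> z * g ! k = (\<Sum>s\<in>S. of_int (c s) * s)"
    proof (cases "k < m")
      case True
      then have "g ! k \<in> S" using g m_def by auto
      then have "z * g ! k \<in> zspan S" by (rule cl)
      then show ?thesis unfolding zspan_def by blast
    qed simp
  qed
  from choice[OF this] obtain C where C0: "\<forall>k. k < m \<longrightarrow> z * g ! k = (\<Sum>s\<in>S. of_int (C k s) * s)"
    by (elim exE)
  then have C: "\<And>k. k < m \<Longrightarrow> z * g ! k = (\<Sum>s\<in>S. of_int (C k s) * s)" by blast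
  define A where "A = mat m m (\<lambda>(k,l). C k (g ! l))"
  define A' where "A' = map_mat (of_int :: int \<Rightarrow> complex) A"
  define v where "v = vec m (\<lambda>k. g ! k)"
  have cA: "A \<in> carrier_mat m m" and cA': "A' \<in> carrier_mat m m" unfolding A_def A'_def by auto
  have Av: "A' *\<^sub>v v = z \<cdot>\<^sub>v v"
  proof (rule eq_vecI)
    fix k assume "k < dim_vec (z \<cdot>\<^sub>v v)"
    then have k: "k < m" unfolding v_def by simp
    have "(A' *\<^sub>v v) $ k = (\<Sum>l\<in>{0..<m}. of_int (C k (g ! l)) * g ! l)"
      using k unfolding A'_def A_def v_def by (simp add: scalar_prod_def)
    also have "\<dots> = (\<Sum>l<m. of_int (C k (g ! l)) * g ! l)" by (simp add: atLeast0LessThan)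
    also have "\<dots> = (\<Sum>s\<in>S. of_int (C k s) * s)"
      using sum_set_nth'[OF g(2), of "\<lambda>s. of_int (C k s) * s"] g(1) m_def by simp
    also have "\<dots> = z * g ! k" using C[OF k] by simp
    also have "\<dots> = (z \<cdot>\<^sub>v v) $ k" using k unfolding v_def by simp
    finally show "(A' *\<^sub>v v) $ k = (z \<cdot>\<^sub>v v) $ k" .
  qed (simp add: A'_def A_def v_def)
  have vnz: "v \<noteq> 0\<^sub>v m"
  proof
    assume "v = 0\<^sub>v m"
    obtain k where "k < m" "g ! k = s0" using nz(1) g m_def by (metis in_set_conv_nth)
    then have "v $ k = s0" unfolding v_def by simp
    then show False using \<open>v = 0\<^sub>v m\<close> \<open>k < m\<close> nz(2) by simp
  qed
  have "eigenvector A' v z" unfolding eigenvector_def using cA' Av vnz unfolding v_def by auto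
  then have "eigenvalue A' z" unfolding eigenvalue_def by blast
  then have "poly (char_poly A') z = 0" using eigenvalue_root_char_poly[OF cA'] by simp
  moreover have "char_poly A' = map_poly of_int (char_poly A)"
    unfolding A'_def by (rule of_int_hom.char_poly_hom[OF cA])
  moreover have "lead_coeff (char_poly A) = 1" using degree_monic_char_poly[OF cA] by simp
  ultimately show ?thesis unfolding algebraic_int_altdef_ipoly by metis
qed

section \<open>Closure of algebraic integers\<close>

lemma alg_int_reduce: fixes x :: complex assumes "algebraic_int x"
  shows "\<exists>d a. d \<ge> 1 \<and> x ^ d = (\<Sum>i<d. of_int (a i) * x ^ i)"
proof -
  obtain p where p: "poly (map_poly of_int p) x = 0" "lead_coeff p = 1"
    using assms unfolding algebraic_int_altdef_ipoly by blast
  define d where "d = degree p"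
  have dm: "degree (map_poly (of_int :: int \<Rightarrow> complex) p) = d" unfolding d_def
    by (rule degree_map_poly) simp
  have sum0: "0 = (\<Sum>i\<le>d. of_int (coeff p i) * x ^ i)"
    using p(1) unfolding poly_altdef dm by simp
  have d1: "d \<ge> 1"
  proof (rule ccontr)
    assume "\<not> d \<ge> 1"
    then have "d = 0" by simp
    then have "(0::complex) = of_int (lead_coeff p)" using sum0 unfolding d_def by simp
    then show False using p(2) by simp
  qed
  have "0 = (\<Sum>i<d. of_int (coeff p i) * x ^ i) + x ^ d"
    using p(2) sum0 unfolding d_def[symmetric] by (simp add: lessThan_Suc_atMost[symmetric])
  then have "x ^ d = - (\<Sum>i<d. of_int (coeff p i) * x ^ i)" by (metis add_eq_0_iff)
  also have "\<dots> = (\<Sum>i<d. of_int (- coeff p i) * x ^ i)" by (simp add: sum_negf)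
  finally have xd: "x ^ d = (\<Sum>i<d. of_int (- coeff p i) * x ^ i)" .
  show ?thesis using d1 xd by (intro exI[of _ d] exI[of _ "\<lambda>i. - coeff p i"]) simp
qed

lemma alg_int_add_mult: fixes x y :: complex assumes x: "algebraic_int x" and y: "algebraic_int y"
  shows "algebraic_int (x + y) \<and> algebraic_int (x * y)"
proof -
  obtain d a where d: "d \<ge> 1" "x ^ d = (\<Sum>i<d. of_int (a i) * x ^ i)" using alg_int_reduce[OF x] by blast
  obtain e b where e: "e \<ge> 1" "y ^ e = (\<Sum>i<e. of_int (b i) * y ^ i)" using alg_int_reduce[OF y] by blast
  define S where "S = (\<lambda>(i,j). x ^ i * y ^ j) ` ({..<d} \<times> {..<e})"
  have fin: "finite S" unfolding S_def by simp
  have inS: "x ^ i * y ^ j \<in> S" if "i < d" "j < e" for i j unfolding S_def using that by force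
  have one: "1 \<in> S" using inS[of 0 0] d e by simp
  have X: "x * s \<in> zspan S" if s: "s \<in> S" for s
  proof -
    obtain i j where ij: "i < d" "j < e" "s = x ^ i * y ^ j" using s unfolding S_def by auto
    show ?thesis
    proof (cases "Suc i < d")
      case True
      have m: "x ^ Suc i * y ^ j \<in> zspan S" by (rule zspan_base[OF fin inS[OF True ij(2)]])
      have "x * s = x ^ Suc i * y ^ j" using ij by simp
      then show ?thesis using m by metis
    next
      case False
      then have "Suc i = d" using ij by simp
      then have "x * s = x ^ d * y ^ j" using ij by (metis mult.assoc power_Suc)
      also have "\<dots> = (\<Sum>i'<d. of_int (a i') * x ^ i') * y ^ j"
        using d(2) by simp
      also have "\<dots> = (\<Sum>i'<d. of_int (a i') * (x ^ i' * y ^ j))"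
        by (simp add: sum_distrib_right mult.assoc)
      also have "\<dots> \<in> zspan S" using inS ij(2) by (intro zspan_sum zspan_smult zspan_base[OF fin]) auto
      finally show ?thesis .
    qed
  qed
  have Y: "y * s \<in> zspan S" if s: "s \<in> S" for s
  proof -
    obtain i j where ij: "i < d" "j < e" "s = x ^ i * y ^ j" using s unfolding S_def by auto
    show ?thesis
    proof (cases "Suc j < e")
      case True
      have m: "x ^ i * y ^ Suc j \<in> zspan S" by (rule zspan_base[OF fin inS[OF ij(1) True]])
      have "y * s = x ^ i * y ^ Suc j" using ij by (simp add: algebra_simps)
      then show ?thesis using m by metis
    next
      case False
      then have "Suc j = e" using ij by simp
      then have "y * s = x ^ i * y ^ e" using ij by (metis mult.left_commute power_Suc)
      also have "\<dots> = x ^ i * (\<Sum>j'<e. of_int (b j') * y ^ j')"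
        using e(2) by simp
      also have "\<dots> = (\<Sum>j'<e. of_int (b j') * (x ^ i * y ^ j'))"
        by (simp add: sum_distrib_left mult.left_commute)
      also have "\<dots> \<in> zspan S" using inS ij(1) by (intro zspan_sum zspan_smult zspan_base[OF fin]) auto
      finally show ?thesis .
    qed
  qed
  have "algebraic_int (x + y)"
  proof (rule det_trick[OF fin one])
    fix s assume "s \<in> S"
    then show "(x + y) * s \<in> zspan S" using X Y zspan_add by (simp add: distrib_right)
  qed simp
  moreover have "algebraic_int (x * y)"
  proof (rule det_trick[OF fin one])
    fix s assume "s \<in> S"
    then have "y * s \<in> zspan S" by (rule Y)
    then have "x * (y * s) \<in> zspan S" using zspan_mult_closed[OF fin, of x "y * s"] X by blast
    then show "(x * y) * s \<in> zspan S" by (simp add: mult.assoc)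
  qed simp
  ultimately show ?thesis by blast
qed

lemma alg_int_add: "algebraic_int (x :: complex) \<Longrightarrow> algebraic_int y \<Longrightarrow> algebraic_int (x + y)"
  using alg_int_add_mult by blast
lemma alg_int_mult: "algebraic_int (x :: complex) \<Longrightarrow> algebraic_int y \<Longrightarrow> algebraic_int (x * y)"
  using alg_int_add_mult by blast
lemma alg_int_diff: "algebraic_int (x :: complex) \<Longrightarrow> algebraic_int y \<Longrightarrow> algebraic_int (x - y)"
  using alg_int_add[of x "- y"] by simp
lemma alg_int_sum: "(\<And>i. i \<in> I \<Longrightarrow> algebraic_int (f i :: complex)) \<Longrightarrow> algebraic_int (sum f I)"
  by (induction I rule: infinite_finite_induct) (auto intro: alg_int_add)
lemma alg_int_prod: "(\<And>i. i \<in> I \<Longrightarrow> algebraic_int (f i :: complex)) \<Longrightarrow> algebraic_int (prod f I)"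
  by (induction I rule: infinite_finite_induct) (auto intro: alg_int_mult)

lemma alg_int_rat_int: assumes "algebraic_int (of_rat q :: complex)" shows "q \<in> \<int>"
proof -
  have "(of_rat q :: complex) \<in> \<int>" using rational_algebraic_int_is_int[OF assms] by (simp add: Rats_def)
  then obtain k where "(of_rat q :: complex) = of_int k" by (auto elim: Ints_cases)
  then have "q = of_int k" by (metis of_rat_eq_iff of_rat_of_int_eq)
  then show ?thesis by simp
qed

lemma det_nz_indep: assumes sf: "subfield_C K" and bij: "bij_betw \<sigma> {..<n} (gal K)"
  and wK: "set w \<subseteq> K" and len: "length w = n" and d: "det (Wm \<sigma> n w) \<noteq> 0"
  shows "q_indep w"
  unfolding q_indep_def
proof (rule allI, rule impI)
  fix c assume c: "(\<Sum>i<length w. of_rat (c i) * w ! i) = 0"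
  let ?v = "vec n (\<lambda>j. of_rat (c j) :: complex)"
  have wK': "w ! k \<in> K" if "k < n" for k using wK that len by auto
  have "Wm \<sigma> n w *\<^sub>v ?v = 0\<^sub>v n"
  proof (rule eq_vecI)
    fix k assume "k < dim_vec (0\<^sub>v n :: complex vec)"
    then have k: "k < n" by simp
    have "(Wm \<sigma> n w *\<^sub>v ?v) $ k = (\<Sum>j\<in>{0..<n}. Wm \<sigma> n w $$ (k,j) * of_rat (c j))"
      using k by (simp add: scalar_prod_def)
    also have "\<dots> = (\<Sum>j<n. of_rat (c j) * \<sigma> k (w ! j))"
      by (rule sum.cong) (use k in \<open>auto simp: atLeast0LessThan mult.commute\<close>)
    also have "\<dots> = \<sigma> k (\<Sum>j<n. of_rat (c j) * w ! j)"
      by (rule gal_qcomb[OF sf bij_gal[OF bij k], symmetric]) (simp add: wK')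
    also have "\<dots> = 0" using c len gal_0[OF sf bij_gal[OF bij k]] by simp
    finally show "(Wm \<sigma> n w *\<^sub>v ?v) $ k = 0\<^sub>v n $ k" using k by simp
  qed auto
  moreover have "?v \<in> carrier_vec n" by simp
  ultimately have "?v = 0\<^sub>v n" using d det_0_iff_vec_prod_zero[OF Wm_carrier, of \<sigma> n w] by blast
  then show "\<forall>i<length w. c i = 0" using len by (auto simp: vec_eq_iff)
qed

locale nfctx =
  fixes K :: "complex set" and \<sigma> :: "nat \<Rightarrow> complex \<Rightarrow> complex" and n :: nat
  assumes nf: "number_field K" and ndeg: "n = degree_Q K" and bij: "bij_betw \<sigma> {..<n} (gal K)"
begin

lemma sf: "subfield_C K" using nf unfolding number_field_def by blast

definition "b0 = (SOME b. q_basis K b)"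

lemma b0: "q_basis K b0" unfolding b0_def by (rule number_field_basis[OF nf])
lemma b0_len: "length b0 = n" unfolding ndeg degree_Q_def b0_def ..

lemma basis_len: "q_basis K w \<Longrightarrow> length w = n"
  using q_basis_length[OF sf _ b0] b0_len by simp

lemma sg: "i < n \<Longrightarrow> \<sigma> i \<in> gal K" by (rule bij_gal[OF bij])

definition good :: "complex list \<Rightarrow> bool" where
  "good w \<longleftrightarrow> length w = n \<and> set w \<subseteq> ring_of_integers K \<and> q_basis K w"

lemma OK_K: "x \<in> ring_of_integers K \<Longrightarrow> x \<in> K" unfolding ring_of_integers_def by simp
lemma OK_alg: "x \<in> ring_of_integers K \<Longrightarrow> algebraic_int x" unfolding ring_of_integers_def by simp

lemma trace_int: assumes x: "x \<in> ring_of_integers K" shows "trace_Q K x \<in> \<int>"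
proof -
  have "of_rat (trace_Q K x) = (\<Sum>i<n. \<sigma> i x)" by (rule trace_formula[OF nf bij ndeg OK_K[OF x]])
  moreover have "algebraic_int (\<Sum>i<n. \<sigma> i x)"
    by (intro alg_int_sum gal_alg_int[OF sf sg OK_K[OF x] OK_alg[OF x]]) simp
  ultimately show ?thesis using alg_int_rat_int by metis
qed

lemma OK_mult: "x \<in> ring_of_integers K \<Longrightarrow> y \<in> ring_of_integers K \<Longrightarrow> x * y \<in> ring_of_integers K"
  unfolding ring_of_integers_def using K_mult[OF sf] alg_int_mult by auto

lemma good_det: "good w \<Longrightarrow> det (Wm \<sigma> n w) \<noteq> 0"
  unfolding good_def using Wm_det_nz[OF sf bij] by blast

lemma good_dsq_int: assumes g: "good w" shows "\<exists>k::int. det (Wm \<sigma> n w) ^ 2 = of_int k"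
proof -
  have len: "length w = n" and wO: "set w \<subseteq> ring_of_integers K" using g unfolding good_def by auto
  have wK: "set w \<subseteq> K" using wO OK_K by blast
  define T where "T = mat n n (\<lambda>(i,j). trace_Q K (w ! i * w ! j))"
  define T' where "T' = mat n n (\<lambda>(i,j). \<lfloor>trace_Q K (w ! i * w ! j)\<rfloor>)"
  have "T = map_mat of_int T'"
  proof (rule eq_matI)
    fix i j assume "i < dim_row (map_mat (of_int :: int \<Rightarrow> rat) T')" "j < dim_col (map_mat (of_int :: int \<Rightarrow> rat) T')"
    then have i: "i < n" and j: "j < n" unfolding T'_def by auto
    have "w ! i * w ! j \<in> ring_of_integers K" using wO i j len by (intro OK_mult) auto
    then have "trace_Q K (w ! i * w ! j) \<in> \<int>" by (rule trace_int)
    then show "T $$ (i, j) = map_mat of_int T' $$ (i, j)" using i j unfolding T_def T'_def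
      by (auto elim: Ints_cases)
  qed (auto simp: T_def T'_def)
  then have "det T = of_int (det T')" by simp
  then have "of_rat (det T) = (of_int (det T') :: complex)" by simp
  moreover have "of_rat (det T) = det (Wm \<sigma> n w) ^ 2" unfolding T_def by (rule disc_mat[OF nf bij ndeg wK len])
  ultimately show ?thesis by metis
qed

lemma good_dsq_ge1: assumes g: "good w" shows "cmod (det (Wm \<sigma> n w) ^ 2) \<ge> 1"
  and "cmod (det (Wm \<sigma> n w) ^ 2) = of_int \<lfloor>cmod (det (Wm \<sigma> n w) ^ 2)\<rfloor>"
proof -
  obtain k where k: "det (Wm \<sigma> n w) ^ 2 = of_int k" using good_dsq_int[OF g] by blast
  have "k \<noteq> 0" using k good_det[OF g] by auto
  then show "cmod (det (Wm \<sigma> n w) ^ 2) \<ge> 1" using k by simp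
  show "cmod (det (Wm \<sigma> n w) ^ 2) = of_int \<lfloor>cmod (det (Wm \<sigma> n w) ^ 2)\<rfloor>" using k by simp
qed

end

lemma triang_det: assumes i0: "i0 < n" and r0: "\<And>j. i0 < j \<Longrightarrow> j < n \<Longrightarrow> r j = 0"
  shows "det (mat n n (\<lambda>(j,l). if l = i0 then r j else if j = l then 1 else (0::complex))) = r i0"
proof -
  let ?C = "mat n n (\<lambda>(j,l). if l = i0 then r j else if j = l then 1 else (0::complex))"
  have ut: "upper_triangular ?C" unfolding upper_triangular_def using r0 by auto
  have "det ?C = prod_list (diag_mat ?C)" by (rule det_upper_triangular[OF ut, of n]) simp
  also have "\<dots> = (\<Prod>i = 0..<n. ?C $$ (i,i))" by (simp add: prod_list_diag_prod)
  also have "\<dots> = (\<Prod>i = 0..<n. if i = i0 then r i0 else 1)" by (rule prod.cong) auto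
  also have "\<dots> = r i0" using i0 by (simp add: prod.delta)
  finally show ?thesis .
qed

lemma cmod_of_rat: "cmod (of_rat q) = \<bar>of_rat q :: real\<bar>"
proof -
  have "(of_rat q :: complex) = of_real (of_rat q)" by (cases q) (simp add: of_rat_rat)
  then show ?thesis by simp
qed

context nfctx
begin

definition "msr w = nat \<lfloor>cmod (det (Wm \<sigma> n w) ^ 2)\<rfloor>"

lemma min_integral: assumes g: "good w" and mn: "\<And>w'. good w' \<Longrightarrow> msr w \<le> msr w'"
  shows "integral_basis K w"
proof -
  have len: "length w = n" and wO: "set w \<subseteq> ring_of_integers K" and qb: "q_basis K w"
    using g unfolding good_def by auto
  have wK: "set w \<subseteq> K" using wO OK_K by blast
  have wK': "w ! k \<in> K" if "k < n" for k using wK that len by auto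
  have wO': "w ! k \<in> ring_of_integers K" if "k < n" for k using wO that len by auto
  have "\<exists>c. x = (\<Sum>i<length w. of_int (c i) * w ! i)" if x: "x \<in> ring_of_integers K" for x
  proof -
    define c where "c = coord w x"
    have xr: "x = (\<Sum>i<n. of_rat (c i) * w ! i)" using coord_repr[OF qb OK_K[OF x]] len unfolding c_def by simp
    show ?thesis
    proof (cases "\<forall>i<n. c i \<in> \<int>")
      case True
      have "of_rat (c i) = (of_int \<lfloor>c i\<rfloor> :: complex)" if "i < n" for i
        using True that by (metis Ints_cases floor_of_int of_rat_of_int_eq)
      then have "x = (\<Sum>i<n. of_int \<lfloor>c i\<rfloor> * w ! i)" unfolding xr by (intro sum.cong) auto
      then show ?thesis using len by (intro exI[of _ "\<lambda>i. \<lfloor>c i\<rfloor>"]) simp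
    next
      case False
      define I where "I = {i. i < n \<and> c i \<notin> \<int>}"
      have finI: "finite I" and neI: "I \<noteq> {}" using False unfolding I_def by auto
      define i0 where "i0 = Max I"
      have i0I: "i0 \<in> I" unfolding i0_def using Max_in[OF finI neI] .
      then have i0: "i0 < n" "c i0 \<notin> \<int>" unfolding I_def by auto
      have above: "c j \<in> \<int>" if "i0 < j" "j < n" for j
      proof (rule ccontr)
        assume "c j \<notin> \<int>"
        then have "j \<in> I" using that unfolding I_def by simp
        then have "j \<le> i0" unfolding i0_def using Max_ge[OF finI] by blast
        then show False using that by simp
      qed
      define r where "r = (\<lambda>j. frac (c j))"
      have r0: "r j = 0" if "i0 < j" "j < n" for j using above[OF that] unfolding r_def by simp
      have ri0: "0 < r i0" "r i0 < 1" using i0(2) unfolding r_def by (auto simp: frac_lt_1)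
      define x' where "x' = (\<Sum>j<n. of_rat (r j) * w ! j)"
      have x'eq: "x' = x - (\<Sum>j<n. of_int \<lfloor>c j\<rfloor> * w ! j)"
      proof -
        have "x' = (\<Sum>j<n. of_rat (c j) * w ! j - of_int \<lfloor>c j\<rfloor> * w ! j)"
          unfolding x'_def r_def frac_def by (intro sum.cong) (auto simp: of_rat_diff algebra_simps)
        then show ?thesis unfolding xr by (simp add: sum_subtractf)
      qed
      have x'O: "x' \<in> ring_of_integers K"
      proof -
        have "x' \<in> K" unfolding x'_def using wK' by (intro K_qcomb[OF sf]) auto
        moreover have "algebraic_int x'" unfolding x'eq
          by (intro alg_int_diff alg_int_sum alg_int_mult OK_alg[OF x] OK_alg[OF wO']) auto
        ultimately show ?thesis unfolding ring_of_integers_def by simp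
      qed
      define w' where "w' = w[i0 := x']"
      have len': "length w' = n" unfolding w'_def using len by simp
      have w'O: "set w' \<subseteq> ring_of_integers K"
        unfolding w'_def using set_update_subset_insert[of w i0 x'] wO x'O by blast
      have w'K: "set w' \<subseteq> K" using w'O OK_K by blast
      define C where "C = mat n n (\<lambda>(j,l). if l = i0 then of_rat (r j) else if j = l then 1 else (0::complex))"
      have WC: "Wm \<sigma> n w' = Wm \<sigma> n w * C"
      proof (rule eq_matI)
        fix k l assume "k < dim_row (Wm \<sigma> n w * C)" "l < dim_col (Wm \<sigma> n w * C)"
        then have k: "k < n" and l: "l < n" unfolding C_def by auto
        have "(Wm \<sigma> n w * C) $$ (k,l) = (\<Sum>j\<in>{0..<n}. \<sigma> k (w ! j) * C $$ (j,l))"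
          using k l unfolding C_def by (simp add: scalar_prod_def)
        also have "\<dots> = \<sigma> k (w' ! l)"
        proof (cases "l = i0")
          case True
          have "(\<Sum>j\<in>{0..<n}. \<sigma> k (w ! j) * C $$ (j,l)) = (\<Sum>j<n. of_rat (r j) * \<sigma> k (w ! j))"
            using True i0 by (intro sum.cong) (auto simp: C_def atLeast0LessThan)
          also have "\<dots> = \<sigma> k x'" unfolding x'_def
            by (rule gal_qcomb[OF sf sg[OF k], symmetric]) (simp add: wK')
          also have "\<dots> = \<sigma> k (w' ! l)" using True i0 len unfolding w'_def by simp
          finally show ?thesis .
        next
          case False
          have "(\<Sum>j\<in>{0..<n}. \<sigma> k (w ! j) * C $$ (j,l)) = (\<Sum>j\<in>{0..<n}. if j = l then \<sigma> k (w ! j) else 0)"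
            using False l by (intro sum.cong) (auto simp: C_def)
          also have "\<dots> = \<sigma> k (w ! l)" using l by simp
          also have "\<dots> = \<sigma> k (w' ! l)" using False unfolding w'_def by simp
          finally show ?thesis .
        qed
        also have "\<dots> = Wm \<sigma> n w' $$ (k,l)" using k l by simp
        finally show "Wm \<sigma> n w' $$ (k,l) = (Wm \<sigma> n w * C) $$ (k,l)" by simp
      qed (auto simp: C_def)
      have detC: "det C = of_rat (r i0)" unfolding C_def
        by (rule triang_det[OF i0(1)]) (simp add: r0)
      have dW': "det (Wm \<sigma> n w') = det (Wm \<sigma> n w) * of_rat (r i0)"
      proof -
        have "C \<in> carrier_mat n n" unfolding C_def by simp
        then show ?thesis unfolding WC using det_mult[of "Wm \<sigma> n w" n C] detC by simp
      qed
      have dW0: "det (Wm \<sigma> n w) \<noteq> 0" by (rule good_det[OF g])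
      have dW'0: "det (Wm \<sigma> n w') \<noteq> 0" using dW' dW0 ri0 by simp
      have "q_indep w'" by (rule det_nz_indep[OF sf bij w'K len' dW'0])
      then have "q_basis K w'" using q_indep_basis[OF sf b0 _ w'K] len' b0_len by simp
      then have g': "good w'" unfolding good_def using len' w'O by simp
      have rr: "0 < (of_rat (r i0) :: real)" "(of_rat (r i0) :: real) < 1" using ri0
        by (metis of_rat_0 of_rat_less, metis of_rat_1 of_rat_less)
      have "cmod (det (Wm \<sigma> n w') ^ 2) = cmod (det (Wm \<sigma> n w) ^ 2) * (of_rat (r i0) :: real) ^ 2"
        unfolding dW' by (simp add: norm_mult norm_power power_mult_distrib cmod_of_rat abs_of_pos[OF ri0(1)])
      also have "\<dots> < cmod (det (Wm \<sigma> n w) ^ 2)"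
      proof -
        have "(of_rat (r i0) :: real) ^ 2 < 1" using rr by (simp add: power_less_one_iff)
        moreover have "cmod (det (Wm \<sigma> n w) ^ 2) > 0" using dW0 by simp
        ultimately show ?thesis by simp
      qed
      finally have lt: "cmod (det (Wm \<sigma> n w') ^ 2) < cmod (det (Wm \<sigma> n w) ^ 2)" .
      have "msr w' < msr w"
      proof -
        define a where "a = cmod (det (Wm \<sigma> n w') ^ 2)"
        define b where "b = cmod (det (Wm \<sigma> n w) ^ 2)"
        have fa: "a = of_int \<lfloor>a\<rfloor>" and a1: "a \<ge> 1" unfolding a_def using good_dsq_ge1[OF g'] by auto
        have fb: "b = of_int \<lfloor>b\<rfloor>" unfolding b_def using good_dsq_ge1[OF g] by auto
        have "a < b" using lt unfolding a_def b_def .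
        then have "(of_int \<lfloor>a\<rfloor> :: real) < of_int \<lfloor>b\<rfloor>" using fa fb by simp
        then have ab: "\<lfloor>a\<rfloor> < \<lfloor>b\<rfloor>" by (simp only: of_int_less_iff)
        have a0: "0 \<le> \<lfloor>a\<rfloor>" using a1 by simp
        have "nat \<lfloor>a\<rfloor> < nat \<lfloor>b\<rfloor>" using nat_less_eq_zless[OF a0] ab by blast
        then show ?thesis unfolding msr_def a_def b_def .
      qed
      then show ?thesis using mn[OF g'] by simp
    qed
  qed
  then have ib3: "\<forall>x\<in>ring_of_integers K. \<exists>c. x = (\<Sum>i<length w. of_int (c i) * w ! i)" by blast
  have qi: "q_indep w" using qb unfolding q_basis_def by blast
  show ?thesis unfolding integral_basis_def using wO qi ib3 by (intro conjI) assumption+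
qed

lemma exists_integral_basis: assumes "good w0" shows "\<exists>w. integral_basis K w"
proof -
  obtain w where w: "good w" "\<forall>w'. good w' \<longrightarrow> msr w \<le> msr w'"
    using ex_has_least_nat[of good w0 msr] assms by blast
  have "integral_basis K w" by (rule min_integral[OF w(1)]) (use w(2) in blast)
  then show ?thesis by blast
qed

end

section \<open>Hadamard's inequality\<close>

interpretation cnj_hom: comm_ring_hom cnj by unfold_locales auto

definition ip :: "nat \<Rightarrow> (nat \<Rightarrow> complex) \<Rightarrow> (nat \<Rightarrow> complex) \<Rightarrow> complex" where
  "ip n u v = (\<Sum>i<n. u i * cnj (v i))"

definition nn :: "nat \<Rightarrow> (nat \<Rightarrow> complex) \<Rightarrow> real" where
  "nn n u = (\<Sum>i<n. (cmod (u i))\<^sup>2)"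

lemma ip_cnj: "ip n v u = cnj (ip n u v)" unfolding ip_def by (simp add: mult.commute)

lemma ip_self: "ip n u u = of_real (nn n u)"
  unfolding ip_def nn_def of_real_sum by (rule sum.cong) (simp_all only: complex_norm_square)

lemma nn_nonneg: "nn n u \<ge> 0" unfolding nn_def by (simp add: sum_nonneg)

lemma ip_self_0: assumes "ip n u u = 0" "i < n" shows "u i = 0"
proof -
  have "nn n u = 0" using assms(1) ip_self[of n u] by simp
  then have "\<forall>i\<in>{..<n}. (cmod (u i))\<^sup>2 = 0" unfolding nn_def by (subst sum_nonneg_eq_0_iff[symmetric]) auto
  then show ?thesis using assms(2) by simp
qed

lemma ip_zero_left: "(\<And>i. i < n \<Longrightarrow> u i = 0) \<Longrightarrow> ip n u v = 0" unfolding ip_def by simp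
lemma ip_zero_right: "(\<And>i. i < n \<Longrightarrow> v i = 0) \<Longrightarrow> ip n u v = 0" unfolding ip_def by simp

lemma ip_lin: "ip n (\<lambda>i. u i - (\<Sum>l\<in>L. c l * v l i)) w = ip n u w - (\<Sum>l\<in>L. c l * ip n (v l) w)"
  unfolding ip_def by (simp add: algebra_simps sum_subtractf sum_distrib_left sum_distrib_right sum.swap[of _ L])

primrec gsl :: "nat \<Rightarrow> (nat \<Rightarrow> nat \<Rightarrow> complex) \<Rightarrow> nat \<Rightarrow> (nat \<Rightarrow> complex) list" where
  "gsl n a 0 = []"
| "gsl n a (Suc j) = gsl n a j @
     [(\<lambda>i. a j i - (\<Sum>l<j. (ip n (a j) (gsl n a j ! l) / ip n (gsl n a j ! l) (gsl n a j ! l)) * (gsl n a j ! l) i))]"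

lemma gsl_length[simp]: "length (gsl n a j) = j" by (induction j) auto

lemma gsl_prefix: "l < j \<Longrightarrow> gsl n a j ! l = gsl n a (Suc l) ! l"
proof (induction j)
  case 0 then show ?case by simp
next
  case (Suc j)
  show ?case
  proof (cases "l < j")
    case True then show ?thesis using Suc by (simp add: nth_append)
  next
    case False then have "l = j" using Suc by simp
    then show ?thesis by simp
  qed
qed

definition gsu :: "nat \<Rightarrow> (nat \<Rightarrow> nat \<Rightarrow> complex) \<Rightarrow> nat \<Rightarrow> nat \<Rightarrow> complex" where
  "gsu n a l = gsl n a (Suc l) ! l"

definition gsm :: "nat \<Rightarrow> (nat \<Rightarrow> nat \<Rightarrow> complex) \<Rightarrow> nat \<Rightarrow> nat \<Rightarrow> complex" where
  "gsm n a j l = ip n (a j) (gsu n a l) / ip n (gsu n a l) (gsu n a l)"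

lemma gsu_eq: "gsu n a j = (\<lambda>i. a j i - (\<Sum>l<j. gsm n a j l * gsu n a l i))"
proof -
  have pre: "gsl n a j ! l = gsu n a l" if "l < j" for l using gsl_prefix[OF that] unfolding gsu_def by simp
  have "gsu n a j = (\<lambda>i. a j i - (\<Sum>l<j. (ip n (a j) (gsl n a j ! l) / ip n (gsl n a j ! l) (gsl n a j ! l)) * (gsl n a j ! l) i))"
    unfolding gsu_def by (simp add: nth_append)
  also have "\<dots> = (\<lambda>i. a j i - (\<Sum>l<j. gsm n a j l * gsu n a l i))"
    by (intro ext arg_cong2[where f="(-)"] refl sum.cong) (simp_all add: gsm_def pre)
  finally show ?thesis .
qed

lemma gsu_orth: "m < j \<Longrightarrow> ip n (gsu n a j) (gsu n a m) = 0"
proof (induction j arbitrary: m rule: less_induct)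
  case (less j)
  let ?u = "gsu n a"
  have orth: "ip n (?u l) (?u m') = 0" if "l < j" "m' < j" "l \<noteq> m'" for l m'
  proof (cases "m' < l")
    case True then show ?thesis using less.IH that by blast
  next
    case False then have "l < m'" using that by simp
    then have "ip n (?u m') (?u l) = 0" using less.IH that by blast
    then show ?thesis using ip_cnj[of n "?u l" "?u m'"] by simp
  qed
  have "ip n (?u j) (?u m) = ip n (a j) (?u m) - (\<Sum>l<j. gsm n a j l * ip n (?u l) (?u m))"
    by (subst gsu_eq) (rule ip_lin)
  also have "(\<Sum>l<j. gsm n a j l * ip n (?u l) (?u m)) = gsm n a j m * ip n (?u m) (?u m)"
    using less.prems orth by (subst sum.remove[of _ m]) (auto intro!: sum.neutral)
  also have "ip n (a j) (?u m) - gsm n a j m * ip n (?u m) (?u m) = 0"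
  proof (cases "ip n (?u m) (?u m) = 0")
    case True
    then have "ip n (a j) (?u m) = 0" using ip_self_0[OF True] by (intro ip_zero_right) auto
    then show ?thesis using True by simp
  next
    case False then show ?thesis unfolding gsm_def by simp
  qed
  finally show ?case .
qed

lemma gsu_norm: "nn n (gsu n a j) \<le> nn n (a j)"
proof -
  let ?u = "gsu n a"
  define v where "v = (\<lambda>i. \<Sum>l<j. gsm n a j l * ?u l i)"
  have aj: "a j = (\<lambda>i. ?u j i + v i)" unfolding v_def by (subst gsu_eq) simp
  have uv: "ip n (?u j) v = 0"
  proof -
    have "ip n (?u j) v = (\<Sum>l<j. cnj (gsm n a j l) * ip n (?u j) (?u l))"
      unfolding ip_def v_def by (simp add: sum_distrib_left sum_distrib_right sum.swap[of _ "{..<j}"] algebra_simps)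
    also have "\<dots> = 0" using gsu_orth by simp
    finally show ?thesis .
  qed
  have vu: "ip n v (?u j) = 0" using uv ip_cnj[of n v "?u j"] by simp
  have "ip n (a j) (a j) = ip n (?u j) (?u j) + ip n (?u j) v + ip n v (?u j) + ip n v v"
    by (subst aj)+ (simp add: ip_def algebra_simps sum.distrib)
  then have "of_real (nn n (a j)) = (of_real (nn n (?u j) + nn n v) :: complex)"
    using uv vu by (simp add: ip_self)
  then have "nn n (a j) = nn n (?u j) + nn n v" by (simp only: of_real_eq_iff)
  then show ?thesis using nn_nonneg[of n v] by simp
qed

lemma hadamard: fixes A :: "complex mat" assumes A: "A \<in> carrier_mat n n"
  shows "(cmod (det A))\<^sup>2 \<le> (\<Prod>j<n. \<Sum>i<n. (cmod (A $$ (i,j)))\<^sup>2)"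
proof -
  define a where "a = (\<lambda>j i. A $$ (i,j))"
  let ?u = "gsu n a"
  define U where "U = mat n n (\<lambda>(i,j). ?u j i)"
  define T where "T = mat n n (\<lambda>(l,j). if l = j then 1 else if l < j then gsm n a j l else 0)"
  have cU: "U \<in> carrier_mat n n" and cT: "T \<in> carrier_mat n n" unfolding U_def T_def by auto
  have AUT: "A = U * T"
  proof (rule eq_matI)
    fix i j assume "i < dim_row (U * T)" "j < dim_col (U * T)"
    then have i: "i < n" and j: "j < n" unfolding U_def T_def by auto
    have "(U * T) $$ (i,j) = (\<Sum>l\<in>{0..<n}. ?u l i * T $$ (l,j))"
      using i j unfolding U_def T_def by (simp add: scalar_prod_def)
    also have "\<dots> = (\<Sum>l<n. if l = j then ?u j i else if l < j then gsm n a j l * ?u l i else 0)"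
      using j by (intro sum.cong) (auto simp: T_def atLeast0LessThan)
    also have "\<dots> = ?u j i + (\<Sum>l<j. gsm n a j l * ?u l i)"
    proof -
      have "(\<Sum>l<n. if l = j then ?u j i else if l < j then gsm n a j l * ?u l i else 0)
          = (\<Sum>l<n. (if l = j then ?u j i else 0) + (if l < j then gsm n a j l * ?u l i else 0))"
        by (intro sum.cong) auto
      also have "\<dots> = ?u j i + (\<Sum>l<n. if l < j then gsm n a j l * ?u l i else 0)"
        using j by (simp add: sum.distrib)
      also have "(\<Sum>l<n. if l < j then gsm n a j l * ?u l i else 0) = (\<Sum>l<j. gsm n a j l * ?u l i)"
        using j by (simp add: sum.If_cases lessThan_def Collect_conj_eq[symmetric]) (metis (lifting) less_trans)
      finally show ?thesis .
    qed
    also have "\<dots> = a j i" by (subst gsu_eq) simp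
    finally show "A $$ (i,j) = (U * T) $$ (i,j)" unfolding a_def by simp
  qed (use A cU cT in auto)
  have "upper_triangular T" unfolding upper_triangular_def T_def by auto
  then have dT: "det T = 1" using det_upper_triangular[of T n] cT
    by (simp add: prod_list_diag_prod T_def)
  have dA: "det A = det U" using AUT det_mult[OF cU cT] dT by simp
  define UH where "UH = map_mat cnj (transpose_mat U)"
  have cUH: "UH \<in> carrier_mat n n" unfolding UH_def using cU by auto
  have dUH: "det UH = cnj (det U)" unfolding UH_def using det_transpose[OF cU] by simp
  define G where "G = UH * U"
  have cG: "G \<in> carrier_mat n n" unfolding G_def using cUH cU by auto
  have Gij: "G $$ (j,k) = ip n (?u k) (?u j)" if "j < n" "k < n" for j k
    using that unfolding G_def UH_def U_def ip_def
    by (simp add: scalar_prod_def atLeast0LessThan mult.commute)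
  have "upper_triangular G" unfolding upper_triangular_def
  proof (intro allI impI)
    fix j k assume "j < dim_row G" "k < j"
    then have jk: "j < n" "k < n" "k < j" using cG by auto
    have "ip n (?u j) (?u k) = 0" using gsu_orth[OF jk(3)] .
    then have "ip n (?u k) (?u j) = 0" using ip_cnj[of n "?u k" "?u j"] by simp
    then show "G $$ (j,k) = 0" using Gij[OF jk(1,2)] by simp
  qed
  then have "det G = (\<Prod>j = 0..<n. G $$ (j,j))" using det_upper_triangular[of G n] cG
    by (simp add: prod_list_diag_prod)
  also have "\<dots> = (\<Prod>j<n. of_real (nn n (?u j)))"
    by (intro prod.cong) (auto simp: Gij ip_self atLeast0LessThan)
  also have "\<dots> = of_real (\<Prod>j<n. nn n (?u j))" by simp
  finally have dG: "det G = of_real (\<Prod>j<n. nn n (?u j))" .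
  have "det G = cnj (det U) * det U" unfolding G_def using det_mult[OF cUH cU] dUH by simp
  also have "\<dots> = of_real ((cmod (det U))\<^sup>2)" by (simp only: complex_norm_square mult.commute)
  finally have "(cmod (det U))\<^sup>2 = (\<Prod>j<n. nn n (?u j))" using dG by (simp only: of_real_eq_iff)
  also have "\<dots> \<le> (\<Prod>j<n. nn n (a j))" by (intro prod_mono) (auto simp: nn_nonneg gsu_norm)
  also have "\<dots> = (\<Prod>j<n. \<Sum>i<n. (cmod (A $$ (i,j)))\<^sup>2)" unfolding nn_def a_def ..
  finally show ?thesis using dA by simp
qed

lemma sum_gal_shift: assumes sf: "subfield_C K" and bij: "bij_betw \<sigma> {..<n} (gal K)"
  and fin: "finite (gal K)" and j: "j < n"
  shows "(\<Sum>i<n. f (\<sigma> i \<circ> \<sigma> j)) = (\<Sum>i<n. f (\<sigma> i))"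
proof -
  have sj: "\<sigma> j \<in> gal K" using bij_gal[OF bij j] .
  have "(\<Sum>i<n. f (\<sigma> i \<circ> \<sigma> j)) = (\<Sum>\<tau>\<in>gal K. f (\<tau> \<circ> \<sigma> j))"
    using sum.reindex_bij_betw[OF bij, of "\<lambda>\<tau>. f (\<tau> \<circ> \<sigma> j)"] by simp
  also have "\<dots> = (\<Sum>\<tau>\<in>(\<lambda>\<tau>. \<tau> \<circ> \<sigma> j) ` gal K. f \<tau>)"
    using sum.reindex[OF gal_comp_right_inj[OF sf sj], of f] by simp
  also have "\<dots> = (\<Sum>\<tau>\<in>gal K. f \<tau>)" using gal_comp_right_bij[OF sf sj fin] by simp
  also have "\<dots> = (\<Sum>i<n. f (\<sigma> i))" using sum.reindex_bij_betw[OF bij, of f] by simp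
  finally show ?thesis .
qed

theorem proposition2:
  fixes K :: "complex set" and n :: nat and \<sigma> :: "nat \<Rightarrow> complex \<Rightarrow> complex" and \<beta> :: complex
  assumes "number_field K" and "galois K" and "n = degree_Q K"
    and "bij_betw \<sigma> {..<n} (gal K)"
    and "\<beta> \<in> ring_of_integers K"
    and "q_basis K (map (\<lambda>i. \<sigma> i \<beta>) [0..<n])"
  shows "(\<Sum>i<n. (cmod (\<sigma> i \<beta>))\<^sup>2) \<ge> \<bar>real_of_rat (disc K)\<bar> powr (1 / real n)"
proof -
  interpret nfctx K \<sigma> n using assms(1,3,4) by unfold_locales
  have fin: "finite (gal K)" using assms(2) unfolding galois_def by blast
  define bl where "bl = map (\<lambda>i. \<sigma> i \<beta>) [0..<n]"
  have bl_len: "length bl = n" unfolding bl_def by simp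
  have bl_nth: "bl ! j = \<sigma> j \<beta>" if "j < n" for j unfolding bl_def using that by simp
  have bO: "\<sigma> j \<beta> \<in> ring_of_integers K" if "j < n" for j
    using assms(5) gal_K[OF sf sg[OF that]] gal_alg_int[OF sf sg[OF that]]
    unfolding ring_of_integers_def by auto
  have blO: "set bl \<subseteq> ring_of_integers K" unfolding bl_def using bO by auto
  have gbl: "good bl" unfolding good_def using bl_len blO assms(6) unfolding bl_def by simp
  obtain w0 where "integral_basis K w0" using exists_integral_basis[OF gbl] by blast
  define w where "w = (SOME w. integral_basis K w)"
  have ib: "integral_basis K w" unfolding w_def by (rule someI, fact)
  have wO: "set w \<subseteq> ring_of_integers K" and wi: "q_indep w"
    and wsp: "\<And>x. x \<in> ring_of_integers K \<Longrightarrow> \<exists>c. x = (\<Sum>i<length w. of_int (c i) * w ! i)"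
    using ib unfolding integral_basis_def by auto
  have wK: "set w \<subseteq> K" using wO OK_K by blast
  have bl_span: "bl ! j \<in> Q.span (set w)" if j: "j < n" for j
  proof -
    obtain c where c: "bl ! j = (\<Sum>i<length w. of_int (c i) * w ! i)"
      using wsp[OF bO[OF j]] bl_nth[OF j] by auto
    have "bl ! j = (\<Sum>i<length w. of_rat (of_int (c i)) * w ! i)" unfolding c by simp
    then show ?thesis using comb_span by metis
  qed
  have "x \<in> Q.span (set w)" if x: "x \<in> K" for x
  proof -
    obtain c where c: "x = (\<Sum>j<length bl. of_rat (c j) * bl ! j)"
      using x gbl unfolding good_def q_basis_def by blast
    show ?thesis unfolding c using bl_span bl_len by (intro Q.span_sum Q.span_scale) auto
  qed
  then have "\<forall>x\<in>K. \<exists>c. x = (\<Sum>i<length w. of_rat (c i) * w ! i)"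
    using span_comb[OF q_indep_distinct[OF wi]] by blast
  then have wqb: "q_basis K w" unfolding q_basis_def using wK wi by blast
  have wlen: "length w = n" by (rule basis_len[OF wqb])
  have gw: "good w" unfolding good_def using wlen wO wqb by simp
  have "\<forall>j. \<exists>c. j < n \<longrightarrow> bl ! j = (\<Sum>k<n. of_int (c k) * w ! k)"
  proof
    fix j show "\<exists>c. j < n \<longrightarrow> bl ! j = (\<Sum>k<n. of_int (c k) * w ! k)"
    proof (cases "j < n")
      case True then show ?thesis using wsp[OF bO[OF True]] bl_nth[OF True] wlen by auto
    qed simp
  qed
  from choice[OF this] obtain a where a0: "\<forall>j. j < n \<longrightarrow> bl ! j = (\<Sum>k<n. of_int (a j k) * w ! k)"
    by (elim exE)
  have a: "bl ! j = (\<Sum>k<n. of_int (a j k) * w ! k)" if "j < n" for j using a0 that by blast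
  define Bi where "Bi = mat n n (\<lambda>(k,j). a j k)"
  define B where "B = map_mat (of_int :: int \<Rightarrow> complex) Bi"
  have cB: "B \<in> carrier_mat n n" unfolding B_def Bi_def by simp
  have WB: "Wm \<sigma> n bl = Wm \<sigma> n w * B"
  proof (rule eq_matI)
    fix i j assume "i < dim_row (Wm \<sigma> n w * B)" "j < dim_col (Wm \<sigma> n w * B)"
    then have i: "i < n" and j: "j < n" using cB by auto
    have "(Wm \<sigma> n w * B) $$ (i,j) = (\<Sum>k\<in>{0..<n}. \<sigma> i (w ! k) * of_int (a j k))"
      using i j cB unfolding B_def Bi_def by (simp add: scalar_prod_def)
    also have "\<dots> = (\<Sum>k<n. of_int (a j k) * \<sigma> i (w ! k))"
      by (simp add: atLeast0LessThan mult.commute)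
    also have "\<dots> = \<sigma> i (\<Sum>k<n. of_int (a j k) * w ! k)"
      by (rule gal_icomb[OF sf sg[OF i], symmetric]) (use wK wlen in auto)
    also have "\<dots> = Wm \<sigma> n bl $$ (i,j)" using a[OF j] i j by simp
    finally show "Wm \<sigma> n bl $$ (i,j) = (Wm \<sigma> n w * B) $$ (i,j)" by simp
  qed (use cB in auto)
  have dB: "det B = of_int (det Bi)" unfolding B_def by simp
  have dbl: "det (Wm \<sigma> n bl) = det (Wm \<sigma> n w) * of_int (det Bi)"
    unfolding WB using det_mult[OF Wm_carrier cB] dB by simp
  have "det (Wm \<sigma> n bl) \<noteq> 0" by (rule good_det[OF gbl])
  then have "det Bi \<noteq> 0" using dbl by auto
  then have "cmod (of_int (det Bi)) \<ge> 1" by simp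
  then have le1: "cmod (det (Wm \<sigma> n w)) \<le> cmod (det (Wm \<sigma> n bl))"
    unfolding dbl norm_mult by (simp add: mult_le_cancel_left1)
  have "of_rat (disc K) = det (Wm \<sigma> n w) ^ 2"
    unfolding disc_def Let_def w_def[symmetric] wlen by (rule disc_mat[OF nf bij ndeg wK wlen])
  then have dK: "\<bar>real_of_rat (disc K)\<bar> = (cmod (det (Wm \<sigma> n w)))\<^sup>2"
    using cmod_of_rat[of "disc K"] by (simp add: norm_power)
  define S where "S = (\<Sum>i<n. (cmod (\<sigma> i \<beta>))\<^sup>2)"
  have S0: "S \<ge> 0" unfolding S_def by (simp add: sum_nonneg)
  have col: "(\<Sum>i<n. (cmod (Wm \<sigma> n bl $$ (i,j)))\<^sup>2) = S" if j: "j < n" for j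
  proof -
    have "(\<Sum>i<n. (cmod (Wm \<sigma> n bl $$ (i,j)))\<^sup>2) = (\<Sum>i<n. (\<lambda>\<tau>. (cmod (\<tau> \<beta>))\<^sup>2) (\<sigma> i \<circ> \<sigma> j))"
      using j by (intro sum.cong) (auto simp: bl_nth)
    also have "\<dots> = (\<Sum>i<n. (\<lambda>\<tau>. (cmod (\<tau> \<beta>))\<^sup>2) (\<sigma> i))" by (rule sum_gal_shift[OF sf bij fin j])
    finally show ?thesis unfolding S_def by simp
  qed
  have "(cmod (det (Wm \<sigma> n bl)))\<^sup>2 \<le> (\<Prod>j<n. \<Sum>i<n. (cmod (Wm \<sigma> n bl $$ (i,j)))\<^sup>2)"
    by (rule hadamard[OF Wm_carrier])
  also have "\<dots> = S ^ n" using col by simp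
  finally have had: "(cmod (det (Wm \<sigma> n bl)))\<^sup>2 \<le> S ^ n" .
  have discS: "\<bar>real_of_rat (disc K)\<bar> \<le> S ^ n"
    unfolding dK using le1 had by (meson norm_ge_zero order_trans power_mono)
  have npos: "n > 0"
  proof (rule ccontr)
    assume "\<not> n > 0"
    then have "n = 0" by simp
    obtain c where "1 = (\<Sum>i<length b0. of_rat (c i) * b0 ! i)"
      using b0 K_1[OF sf] unfolding q_basis_def by blast
    then show False using b0_len \<open>n = 0\<close> by simp
  qed
  have "\<bar>real_of_rat (disc K)\<bar> powr (1 / real n) \<le> (S ^ n) powr (1 / real n)"
    by (rule powr_mono2) (use discS in auto)
  also have "(S ^ n) powr (1 / real n) = S"
  proof (cases "S = 0")
    case True then show ?thesis using npos by simp
  next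
    case False
    then have "S > 0" using S0 by simp
    then have "(S ^ n) powr (1 / real n) = (S powr real n) powr (1 / real n)" by (simp add: powr_realpow)
    also have "\<dots> = S" using npos \<open>S > 0\<close> by (simp add: powr_powr)
    finally show ?thesis .
  qed
  finally show ?thesis unfolding S_def .
qed

end
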